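(* For $t>0$, $a\ge0$ and $r>0$, $$\Big|\int_r^\infty\frac{e^{i\frac{(s+a)^2}{4t}}(s+a)}{\sqrt{\cosh s-\cosh r}}\,ds\Big|\lesssim\begin{cases}\sqrt t\sqrt{\dfrac{r+a}{\sinh r}},& r\ge\frac{\sqrt t}{2},\\[2mm] \sqrt t\,(1+\frac ar),& r<\frac{\sqrt t}{2},\end{cases}$$ with implicit constants independent of $t,a,r$. *)

theory Defs
  imports "HOL-Analysis.Analysis"
begin

end

theory Submission
  imports Defs
begin


lemma E_deriv:
  fixes t a s :: real
  assumes "t \<noteq> 0"
  shows "((\<lambda>s. exp (\<i> * complex_of_real ((s + a)\<^sup>2 / (4 * t)))) has_vector_derivative
      (\<i> * complex_of_real ((s + a) / (2*t)) * exp (\<i> * complex_of_real ((s + a)\<^sup>2 / (4 * t))))) (at s within S)"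
proof -
  have "((\<lambda>z. exp (\<i> * ((z + of_real a)\<^sup>2 / (4 * of_real t)))) has_field_derivative
      (\<i> * ((of_real s + of_real a) / (2 * of_real t)) * exp (\<i> * ((of_real s + of_real a)\<^sup>2 / (4 * of_real t))))) (at (of_real s))"
    using assms by (auto intro!: derivative_eq_intros simp: field_simps power2_eq_square)
  from has_vector_derivative_real_field[OF this, of S] show ?thesis by simp
qed

lemma G_deriv:
  fixes r s :: real
  assumes "cosh s - cosh r > 0"
  shows "((\<lambda>s. 1 / sqrt (cosh s - cosh r)) has_real_derivative
      (- sinh s / (2 * (cosh s - cosh r) * sqrt (cosh s - cosh r)))) (at s within S)"
proof -
  have "sqrt (cosh s - cosh r) > 0" using assms by simp
  have ca: "\<And>x::real. cosh x = cosh \<bar>x\<bar>" by (simp add: abs_if)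
  show ?thesis using assms
    by (auto intro!: derivative_eq_intros simp: field_simps) (metis ca less_irrefl)
qed

definition FF :: "real \<Rightarrow> real \<Rightarrow> real \<Rightarrow> real \<Rightarrow> complex" where
  "FF t a r s = exp (\<i> * complex_of_real ((s + a)\<^sup>2 / (4 * t))) * complex_of_real ((s + a) / sqrt (cosh s - cosh r))"

lemma normFF: "norm (FF t a r x) = \<bar>(x + a) / sqrt (cosh x - cosh r)\<bar>"
  unfolding FF_def by (simp only: norm_mult norm_exp_i_times norm_of_real mult_1_left)

lemma Dpos: fixes r x :: real assumes "r \<ge> 0" "x > r" shows "cosh x - cosh r > 0"
  using cosh_real_strict_mono[OF assms] by simp

lemma ibp_bound:
  fixes t a r A B :: real
  assumes t: "t > 0" and r: "r > 0" and A: "A > r" and B: "A \<le> B"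
  shows "norm (integral {A..B} (FF t a r)) \<le> 4 * t / sqrt (cosh A - cosh r)"
proof -
  define E where "E s = exp (\<i> * complex_of_real ((s + a)\<^sup>2 / (4 * t)))" for s
  define E' where "E' s = \<i> * complex_of_real ((s + a) / (2*t)) * E s" for s
  define G where "G s = 1 / sqrt (cosh s - cosh r)" for s
  define Gd where "Gd s = - sinh s / (2 * (cosh s - cosh r) * sqrt (cosh s - cosh r))" for s
  have D: "x \<in> {A..B} \<Longrightarrow> cosh x - cosh r > 0" for x using Dpos[of r x] r A by auto
  have dE: "(E has_vector_derivative E' x) (at x within S)" for x S
    unfolding E_def E'_def using E_deriv[of t a x S] t by simp
  have dG: "x \<in> {A..B} \<Longrightarrow> (G has_real_derivative Gd x) (at x within S)" for x S
    unfolding G_def Gd_def using G_deriv[of x r S] D by simp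
  have dGc: "x \<in> {A..B} \<Longrightarrow> ((\<lambda>x. complex_of_real (G x)) has_vector_derivative complex_of_real (Gd x)) (at x within S)" for x S
    using dG by (intro has_vector_derivative_of_real) auto
  have cE: "continuous_on {A..B} E"
    using dE by (meson continuous_at_imp_continuous_on has_vector_derivative_continuous)
  have cG: "continuous_on {A..B} (\<lambda>x. complex_of_real (G x))"
    using dGc by (meson continuous_at_imp_continuous_on has_vector_derivative_continuous)
  have cGd: "continuous_on {A..B} Gd"
    unfolding Gd_def using D r A by (auto intro!: continuous_intros)
  have int1: "(\<lambda>x. E x * complex_of_real (Gd x)) integrable_on {A..B}"
    by (intro integrable_continuous_interval continuous_intros cE cGd)
  define y where "y = E B * complex_of_real (G B) - E A * complex_of_real (G A) - integral {A..B} (\<lambda>x. E x * complex_of_real (Gd x))"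
  have ibp: "((\<lambda>x. E' x * complex_of_real (G x)) has_integral y) {A..B}"
  proof (rule integration_by_parts[OF bounded_bilinear_mult B cE cG, of E' "\<lambda>x. complex_of_real (Gd x)"])
    show "\<And>x. x \<in> {A..B} \<Longrightarrow> (E has_vector_derivative E' x) (at x)" using dE by blast
    show "\<And>x. x \<in> {A..B} \<Longrightarrow> ((\<lambda>x. complex_of_real (G x)) has_vector_derivative complex_of_real (Gd x)) (at x)"
      using dGc by blast
    show "((\<lambda>x. E x * complex_of_real (Gd x)) has_integral E B * complex_of_real (G B) - E A * complex_of_real (G A) - y) {A..B}"
      unfolding y_def using integrable_integral[OF int1] by simp
  qed
  have FFeq: "FF t a r x = (- 2 * t * \<i>) * (E' x * complex_of_real (G x))" for x
  proof -
    define q where "q = sqrt (cosh x - cosh r)"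
    show ?thesis unfolding FF_def E'_def E_def G_def q_def[symmetric] using t
      by (cases "q = 0") (simp_all add: field_simps)
  qed
  have "(FF t a r has_integral (- 2 * t * \<i>) * y) {A..B}"
    unfolding FFeq by (rule has_integral_mult_right[OF ibp])
  then have I: "integral {A..B} (FF t a r) = (- 2 * t * \<i>) * y" by blast
  have nE: "norm (E x) = 1" for x unfolding E_def by (rule norm_exp_i_times)
  have ftc: "(Gd has_integral (G B - G A)) {A..B}"
    by (rule fundamental_theorem_of_calculus[OF B])
       (use dG in \<open>auto simp: has_real_derivative_iff_has_vector_derivative\<close>)
  have Gdneg: "x \<in> {A..B} \<Longrightarrow> Gd x \<le> 0" for x
    unfolding Gd_def using D[of x] r A by (auto intro!: divide_nonneg_pos)
  have "norm (integral {A..B} (\<lambda>x. E x * complex_of_real (Gd x))) \<le> integral {A..B} (\<lambda>x. - Gd x)"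
    by (rule integral_norm_bound_integral[OF int1])
       (use ftc Gdneg in \<open>auto simp: norm_mult nE intro!: integrable_neg\<close>)
  also have "\<dots> = G A - G B" using ftc by (simp add: integral_neg integral_unique)
  finally have n3: "norm (integral {A..B} (\<lambda>x. E x * complex_of_real (Gd x))) \<le> G A - G B" .
  have GB: "G B \<ge> 0" unfolding G_def using D[of B] B by simp
  have "norm y \<le> norm (E B * complex_of_real (G B)) + norm (E A * complex_of_real (G A)) + norm (integral {A..B} (\<lambda>x. E x * complex_of_real (Gd x)))"
    unfolding y_def using norm_triangle_ineq4[of "E B * complex_of_real (G B) - E A * complex_of_real (G A)" "integral {A..B} (\<lambda>x. E x * complex_of_real (Gd x))"]
      norm_triangle_ineq4[of "E B * complex_of_real (G B)" "E A * complex_of_real (G A)"] by linarith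
  also have "\<dots> \<le> G B + G A + (G A - G B)"
  proof -
    have GA: "G A \<ge> 0" unfolding G_def using D[of A] B by simp
    have "norm (E B * complex_of_real (G B)) = G B" using GB by (simp only: norm_mult nE norm_of_real abs_of_nonneg mult_1_left)
    moreover have "norm (E A * complex_of_real (G A)) = G A" using GA by (simp only: norm_mult nE norm_of_real abs_of_nonneg mult_1_left)
    ultimately show ?thesis using n3 by linarith
  qed
  finally have "norm y \<le> 2 * G A" by simp
  then have "norm (integral {A..B} (FF t a r)) \<le> 2 * t * (2 * G A)"
    unfolding I using t by (simp add: norm_mult)
  then show ?thesis unfolding G_def by simp
qed


lemma majorant:
  fixes t a r A x :: real
  assumes r: "r > 0" and A: "A > r" and a: "a \<ge> 0" and x: "x \<ge> A"
  defines "c \<equiv> 1 - cosh r / cosh A"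
  shows "norm (FF t a r x) \<le> sqrt (32 * exp (a/2) / c) * exp (- (1/4) * x)"
proof -
  have crA: "cosh r < cosh A" using cosh_real_strict_mono[of r A] r A by simp
  have c: "c > 0" unfolding c_def using crA by (simp add: field_simps)
  have cAx: "cosh A \<le> cosh x" using cosh_real_nonneg_le_iff[of A x] r A x by simp
  have Dge: "cosh x - cosh r \<ge> c * cosh x"
  proof -
    have "cosh r / cosh A * cosh x \<ge> cosh r / cosh A * cosh A"
      by (intro mult_left_mono cAx) simp
    then show ?thesis unfolding c_def by (simp add: algebra_simps)
  qed
  have coshx: "cosh x \<ge> exp x / 2" unfolding cosh_def by (simp add: field_simps)
  have Dpos': "cosh x - cosh r > 0" using Dpos[of r x] r A x by simp
  have xa: "x + a \<ge> 0" using r A x a by simp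
  have lin: "x + a \<le> 4 * exp ((x + a) / 4)"
  proof -
    define y where "y = (x+a)/4"
    have "1 + y \<le> exp y" by (rule exp_ge_add_one_self)
    moreover have "x + a = 4 * y" unfolding y_def by simp
    ultimately have "x + a \<le> 4 * exp y" by linarith
    then show ?thesis unfolding y_def .
  qed
  have sq: "(x + a)\<^sup>2 \<le> 16 * exp ((x + a) / 2)"
  proof -
    have "(x + a)\<^sup>2 \<le> (4 * exp ((x + a) / 4))\<^sup>2" by (intro power_mono lin xa)
    also have "\<dots> = 16 * exp ((x + a) / 2)"
      by (simp add: power2_eq_square exp_add[symmetric])
    finally show ?thesis .
  qed
  define M where "M = sqrt (32 * exp (a/2) / c)"
  define e where "e = exp (- (1/4) * x)"
  have M2: "M\<^sup>2 = 32 * exp (a/2) / c" unfolding M_def using c by simp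
  have e2: "e\<^sup>2 * exp x = exp (x / 2)" unfolding e_def
    by (simp add: power2_eq_square exp_add[symmetric])
  have "(x + a)\<^sup>2 \<le> 16 * exp (a/2) * exp (x/2)"
  proof -
    have "exp (a/2) * exp (x/2) = exp ((x + a) / 2)"
      by (simp add: exp_add[symmetric] add_divide_distrib add.commute)
    then show ?thesis using sq by (simp add: mult.assoc)
  qed
  also have "\<dots> = M\<^sup>2 * e\<^sup>2 * (c * (exp x / 2))"
    unfolding M2 using c e2 by (simp add: field_simps)
  also have "\<dots> \<le> M\<^sup>2 * e\<^sup>2 * (cosh x - cosh r)"
  proof -
    have "c * (exp x / 2) \<le> c * cosh x" using mult_left_mono[OF coshx, of c] c by simp
    then have key: "c * (exp x / 2) \<le> cosh x - cosh r" using Dge by linarith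
    show ?thesis by (intro mult_left_mono key) simp
  qed
  also have "\<dots> = (M * e * sqrt (cosh x - cosh r))\<^sup>2"
    using Dpos' by (simp add: power_mult_distrib)
  finally have "x + a \<le> M * e * sqrt (cosh x - cosh r)"
    by (rule power2_le_imp_le) (use c Dpos' in \<open>auto simp: M_def e_def intro!: mult_nonneg_nonneg\<close>)
  then have "(x + a) / sqrt (cosh x - cosh r) \<le> M * e"
    using Dpos' by (simp add: divide_le_eq)
  moreover have "norm (FF t a r x) = (x + a) / sqrt (cosh x - cosh r)"
    unfolding normFF using xa Dpos' by simp
  ultimately show ?thesis unfolding M_def e_def by simp
qed

lemma FF_cont:
  fixes t a r :: real
  assumes "r \<ge> 0" "S \<subseteq> {r<..}" "t > 0"
  shows "continuous_on S (FF t a r)"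
proof -
  have "x \<in> S \<Longrightarrow> sqrt (cosh x - cosh r) \<noteq> 0" for x
    using Dpos[of r x] assms by auto
  then show ?thesis unfolding FF_def using assms(3) by (auto intro!: continuous_intros)
qed

lemma tail_bound:
  fixes t a r A :: real
  assumes t: "t > 0" and r: "r > 0" and A: "A > r" and a: "a \<ge> 0"
  shows "FF t a r integrable_on {A..}"
    "norm (integral {A..} (FF t a r)) \<le> 4 * t / sqrt (cosh A - cosh r)"
proof -
  define c where "c = 1 - cosh r / cosh A"
  define h where "h x = sqrt (32 * exp (a/2) / c) * exp (- (1/4) * x)" for x
  define f where "f k x = (if x \<in> {A..A + real k} then FF t a r x else 0)" for k :: nat and x
  have intk: "FF t a r integrable_on {A..A + real k}" for k :: nat
    by (rule integrable_continuous_interval, rule FF_cont) (use r A t in auto)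
  have fk: "(f k has_integral integral {A..A + real k} (FF t a r)) {A..}" for k
    unfolding f_def by (subst has_integral_restrict) (use intk in auto)
  have hint: "h integrable_on {A..}" unfolding h_def
    using integrable_on_cmult_left[OF integrable_on_exp_minus_to_infinity[of "1/4" A], of "sqrt (32 * exp (a/2) / c)"]
    by simp
  have crA: "cosh r < cosh A" using cosh_real_strict_mono[of r A] r A by simp
  have c: "c > 0" unfolding c_def using crA by (simp add: field_simps)
  have hnn: "h x \<ge> 0" for x unfolding h_def using c by simp
  have le: "x \<in> {A..} \<Longrightarrow> norm (f k x) \<le> h x" for k x
    unfolding f_def using hnn[of x] majorant[of r A a x t] r A a by (auto simp: h_def c_def)
  have conv: "x \<in> {A..} \<Longrightarrow> (\<lambda>k. f k x) \<longlonglongrightarrow> FF t a r x" for x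
  proof -
    assume x: "x \<in> {A..}"
    have "eventually (\<lambda>k. f k x = FF t a r x) sequentially"
      using eventually_ge_at_top[of "nat \<lceil>x - A\<rceil>"] 
    proof eventually_elim
      case (elim k)
      have "x - A \<le> real (nat \<lceil>x - A\<rceil>)" by (rule real_nat_ceiling_ge)
      also have "\<dots> \<le> real k" using elim by simp
      finally show ?case using x by (simp add: f_def)
    qed
    then show ?thesis by (rule tendsto_eventually)
  qed
  note dc = dominated_convergence[of f "{A..}" h "FF t a r", OF _ hint le conv]
  show "FF t a r integrable_on {A..}" using dc(1) fk by blast
  have lim: "(\<lambda>k. integral {A..A + real k} (FF t a r)) \<longlonglongrightarrow> integral {A..} (FF t a r)"
  proof -
    have eqk: "integral {A..} (f k) = integral {A..A + real k} (FF t a r)" for k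
      using fk[of k] by (rule integral_unique)
    show ?thesis using dc(2) fk unfolding eqk by blast
  qed
  show "norm (integral {A..} (FF t a r)) \<le> 4 * t / sqrt (cosh A - cosh r)"
    by (rule Lim_norm_ubound[OF _ lim]) (use ibp_bound[OF t r A] in auto)
qed


lemma sqrt_majorant_integral:
  fixes r d P :: real
  assumes d: "d > 0"
  shows "((\<lambda>s. P / sqrt (s - r)) has_integral (2 * P * sqrt d)) {r<..r+d}"
proof -
  have "((\<lambda>s. P / sqrt (s - r)) has_integral (2 * P * sqrt (r + d - r) - 2 * P * sqrt (r - r))) {r..r+d}"
  proof (rule fundamental_theorem_of_calculus_interior)
    show "r \<le> r + d" using d by simp
    show "continuous_on {r..r + d} (\<lambda>s. 2 * P * sqrt (s - r))"
      by (intro continuous_intros)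
    fix x assume x: "x \<in> {r<..<r+d}"
    have "((\<lambda>s. 2 * P * sqrt (s - r)) has_real_derivative P / sqrt (x - r)) (at x)"
      using x by (auto intro!: derivative_eq_intros simp: field_simps)
    then show "((\<lambda>s. 2 * P * sqrt (s - r)) has_vector_derivative P / sqrt (x - r)) (at x)"
      by (simp add: has_real_derivative_iff_has_vector_derivative)
  qed
  then have "((\<lambda>s. P / sqrt (s - r)) has_integral (2 * P * sqrt d)) {r..r+d}" by simp
  moreover have "negligible {x \<in> {r..r+d} - {r<..r+d}. P / sqrt (x - r) \<noteq> 0}"
    by (rule negligible_subset[of "{r}"]) auto
  moreover have "negligible {x \<in> {r<..r+d} - {r..r+d}. P / sqrt (x - r) \<noteq> 0}"
    by (rule negligible_subset[of "{}"]) auto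
  ultimately show ?thesis
    using has_integral_spike_set_eq[of "{r..r+d}" "{r<..r+d}" "\<lambda>s. P / sqrt (s - r)" "2 * P * sqrt d"] by simp
qed

lemma head_bound:
  fixes t a r d P :: real
  assumes t: "t > 0" and r: "r > 0" and d: "d > 0"
    and bnd: "\<And>s. r < s \<Longrightarrow> s \<le> r + d \<Longrightarrow> norm (FF t a r s) \<le> P / sqrt (s - r)"
  shows "FF t a r integrable_on {r<..r+d}" "norm (integral {r<..r+d} (FF t a r)) \<le> 2 * P * sqrt d"
proof -
  have meas: "FF t a r \<in> borel_measurable (lebesgue_on {r<..r+d})"
    by (rule continuous_imp_measurable_on_sets_lebesgue, rule FF_cont) (use r t in auto)
  have L: "{r<..r+d} \<in> sets lebesgue" by simp
  note gi = sqrt_majorant_integral[OF d, of P r]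
  show "FF t a r integrable_on {r<..r+d}"
    by (rule measurable_bounded_by_integrable_imp_integrable[OF meas _ _ L])
       (use gi bnd in auto)
  show "norm (integral {r<..r+d} (FF t a r)) \<le> 2 * P * sqrt d"
    by (rule integral_norm_bound_integral'[OF _ meas L gi]) (use bnd in auto)
qed


lemma split_bound:
  fixes t a r d P :: real
  assumes t: "t > 0" and r: "r > 0" and d: "d > 0" and a: "a \<ge> 0"
    and bnd: "\<And>s. r < s \<Longrightarrow> s \<le> r + d \<Longrightarrow> norm (FF t a r s) \<le> P / sqrt (s - r)"
  shows "norm (integral {r<..} (FF t a r)) \<le> 2 * P * sqrt d + 4 * t / sqrt (cosh (r + d) - cosh r)"
proof -
  note H = head_bound[OF t r d bnd]
  note T = tail_bound[of t r "r + d" a, OF t r _ a]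
  have "(FF t a r has_integral (integral {r<..r+d} (FF t a r) + integral {r+d..} (FF t a r))) ({r<..r+d} \<union> {r+d..})"
    by (rule has_integral_Un) (use H(1) T(1) d in \<open>auto intro: negligible_subset[of "{r+d}"]\<close>)
  moreover have "{r<..r+d} \<union> {r+d..} = {r<..}" using d by auto
  ultimately have "integral {r<..} (FF t a r) = integral {r<..r+d} (FF t a r) + integral {r+d..} (FF t a r)"
    by (simp add: integral_unique)
  then have "norm (integral {r<..} (FF t a r)) \<le> norm (integral {r<..r+d} (FF t a r)) + norm (integral {r+d..} (FF t a r))"
    by (simp add: norm_triangle_ineq)
  then show ?thesis using H(2) T(2) d by simp
qed

lemma cosh_lower1:
  fixes r s :: real
  assumes "0 \<le> r" "r \<le> s"
  shows "cosh s - cosh r \<ge> sinh r * (s - r)"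
proof (cases "r = s")
  case False
  then have rs: "r < s" using assms by simp
  from rs have "\<exists>z>r. z < s \<and> cosh s - cosh r = (s - r) * sinh z"
    by (intro MVT2) (auto intro!: derivative_eq_intros)
  then obtain z where z: "z > r" "z < s" "cosh s - cosh r = (s - r) * sinh z" by blast
  have "sinh r \<le> sinh z" using z by simp
  then show ?thesis using z rs by (simp add: mult.commute mult_left_mono)
qed simp

lemma cosh_lower2:
  fixes r s :: real
  assumes "0 \<le> r" "r \<le> s"
  shows "cosh s - cosh r \<ge> (s\<^sup>2 - r\<^sup>2) / 2"
proof (cases "r = s")
  case False
  then have rs: "r < s" using assms by simp
  from rs have "\<exists>z>r. z < s \<and> (cosh s - s\<^sup>2/2) - (cosh r - r\<^sup>2/2) = (s - r) * (sinh z - z)"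
    by (intro MVT2) (auto intro!: derivative_eq_intros)
  then obtain z where z: "z > r" "z < s" "(cosh s - s\<^sup>2/2) - (cosh r - r\<^sup>2/2) = (s - r) * (sinh z - z)" by blast
  have "z \<le> sinh z" using real_le_x_sinh[of z] z assms by (simp add: sinh_field_def exp_minus)
  then have "(s - r) * (sinh z - z) \<ge> 0" using rs by simp
  then show ?thesis using z by simp
qed simp


lemma case1:
  fixes t a r :: real
  assumes t: "t > 0" and r: "r > 0" and a: "a \<ge> 0" and big: "sqrt t / 2 \<le> r"
  shows "norm (integral {r<..} (FF t a r)) \<le> 14 * (sqrt t * sqrt ((r + a) / sinh r))"
proof -
  define u where "u = r + a"
  define S where "S = sinh r"
  define d where "d = t / u"
  define P where "P = (u + d) / sqrt S"
  have u: "u > 0" unfolding u_def using r a by simp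
  have S: "S > 0" unfolding S_def using r by simp
  have d: "d > 0" unfolding d_def using t u by simp
  have tle: "t \<le> 4 * r\<^sup>2"
  proof -
    have "sqrt t \<le> 2 * r" using big by simp
    then have "(sqrt t)\<^sup>2 \<le> (2 * r)\<^sup>2" by (intro power_mono) (use t in auto)
    then show ?thesis using t by (simp add: power_mult_distrib)
  qed
  have dle: "d \<le> 4 * u"
  proof -
    have "r\<^sup>2 \<le> u\<^sup>2" unfolding u_def using r a by (intro power_mono) auto
    then have "t \<le> 4 * u * u" using tle by (simp add: power2_eq_square)
    then show ?thesis unfolding d_def using u by (simp add: divide_le_eq)
  qed
  have bnd: "norm (FF t a r s) \<le> P / sqrt (s - r)" if s: "r < s" "s \<le> r + d" for s
  proof -
    have D1: "cosh s - cosh r \<ge> S * (s - r)" unfolding S_def using cosh_lower1[of r s] r s by simp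
    have Sp: "S * (s - r) > 0" using S s by simp
    have sq: "sqrt (cosh s - cosh r) \<ge> sqrt S * sqrt (s - r)"
      using D1 by (simp add: real_sqrt_mult[symmetric])
    have pos: "sqrt S * sqrt (s - r) > 0" using S s by simp
    have "norm (FF t a r s) = (s + a) / sqrt (cosh s - cosh r)"
      unfolding normFF using s r a D1 Sp by simp
    also have "\<dots> \<le> (s + a) / (sqrt S * sqrt (s - r))"
      by (rule divide_left_mono[OF sq]) (use s r a pos D1 Sp in auto)
    also have "\<dots> \<le> (u + d) / (sqrt S * sqrt (s - r))"
      by (rule divide_right_mono) (use s pos in \<open>auto simp: u_def\<close>)
    also have "\<dots> = P / sqrt (s - r)" unfolding P_def by simp
    finally show ?thesis .
  qed
  note SB = split_bound[OF t r d a bnd]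
  have sd: "sqrt d = sqrt t / sqrt u" unfolding d_def by (simp add: real_sqrt_divide)
  have T1: "2 * P * sqrt d \<le> 10 * (sqrt t * sqrt u / sqrt S)"
  proof -
    have "2 * P * sqrt d = 2 * ((u + d) / sqrt u) * (sqrt t / sqrt S)"
      unfolding P_def sd by (simp add: field_simps)
    also have "(u + d) / sqrt u \<le> 5 * sqrt u"
    proof -
      have "(u + d) / sqrt u \<le> (5 * u) / sqrt u" using dle u by (intro divide_right_mono) auto
      also have "(5 * u) / sqrt u = 5 * sqrt u" using u by (metis real_div_sqrt less_imp_le times_divide_eq_right)
      finally show ?thesis .
    qed
    then have "2 * ((u + d) / sqrt u) * (sqrt t / sqrt S) \<le> 2 * (5 * sqrt u) * (sqrt t / sqrt S)"
      using t S by (intro mult_right_mono mult_left_mono) auto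
    finally show ?thesis by (simp add: field_simps)
  qed
  have T2: "4 * t / sqrt (cosh (r + d) - cosh r) \<le> 4 * (sqrt t * sqrt u / sqrt S)"
  proof -
    have D1: "cosh (r + d) - cosh r \<ge> S * d" unfolding S_def using cosh_lower1[of r "r + d"] r d by simp
    have "sqrt (cosh (r + d) - cosh r) \<ge> sqrt (S * d)" using D1 by simp
    moreover have "sqrt (S * d) = sqrt S * sqrt t / sqrt u" by (simp add: real_sqrt_mult sd)
    moreover have "sqrt S * sqrt t / sqrt u > 0" using S t u by simp
    ultimately have le: "sqrt S * sqrt t / sqrt u \<le> sqrt (cosh (r + d) - cosh r)"
      and ps: "sqrt S * sqrt t / sqrt u > 0" by auto
    have X: "0 < sqrt (cosh (r + d) - cosh r) * (sqrt S * sqrt t / sqrt u)"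
      using le ps by (intro mult_pos_pos) linarith+
    have "4 * t / sqrt (cosh (r + d) - cosh r) \<le> 4 * t / (sqrt S * sqrt t / sqrt u)"
      by (rule divide_left_mono[OF le _ X]) (use t in simp)
    also have "\<dots> = 4 * (sqrt t * sqrt t) * sqrt u / (sqrt S * sqrt t)"
      using t by simp
    also have "\<dots> = 4 * (sqrt t * sqrt u / sqrt S)" using t S by (simp add: field_simps)
    finally show ?thesis .
  qed
  have "sqrt ((r + a) / sinh r) = sqrt u / sqrt S" unfolding u_def S_def by (simp add: real_sqrt_divide)
  then show ?thesis using SB T1 T2 by simp
qed


lemma sqrt2_le: "sqrt 2 \<le> 3 / (2::real)"
proof -
  have e: "sqrt (9/4) = 3 / (2::real)" by (rule real_sqrt_unique) (simp_all add: power2_eq_square)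
  have l: "sqrt 2 \<le> sqrt (9/4::real)" by simp
  show ?thesis using e l by linarith
qed

lemma case2:
  fixes t a r :: real
  assumes t: "t > 0" and r: "r > 0" and a: "a \<ge> 0" and small: "r < sqrt t / 2"
  shows "norm (integral {r<..} (FF t a r)) \<le> 14 * (sqrt t * (1 + a / r))"
proof -
  define w where "w = sqrt t"
  have w: "w > 0" unfolding w_def using t by simp
  have tw: "t = w * w" unfolding w_def using t by simp
  have rw: "r < w / 2" using small unfolding w_def .
  define P where "P = sqrt 2 * (sqrt (2 * r + w) + a / sqrt r)"
  have bnd: "norm (FF t a r s) \<le> P / sqrt (s - r)" if s: "r < s" "s \<le> r + w" for s
  proof -
    have D2: "cosh s - cosh r \<ge> (s - r) * (s + r) / 2"
      using cosh_lower2[of r s] r s by (simp add: power2_eq_square algebra_simps)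
    have Q: "(s - r) * (s + r) / 2 > 0" using s r by simp
    have sq: "sqrt (cosh s - cosh r) \<ge> sqrt (s - r) * sqrt (s + r) / sqrt 2"
    proof -
      have "sqrt (cosh s - cosh r) \<ge> sqrt ((s - r) * (s + r) / 2)" using D2 by simp
      then show ?thesis by (simp add: real_sqrt_mult real_sqrt_divide)
    qed
    have pos: "sqrt (s - r) * sqrt (s + r) / sqrt 2 > 0" using s r by simp
    have "norm (FF t a r s) = (s + a) / sqrt (cosh s - cosh r)"
      unfolding normFF using s r a Dpos[of r s] by simp
    also have "\<dots> \<le> (s + a) / (sqrt (s - r) * sqrt (s + r) / sqrt 2)"
    proof (rule divide_left_mono[OF sq])
      show "0 \<le> s + a" using s r a by simp
      show "0 < sqrt (cosh s - cosh r) * (sqrt (s - r) * sqrt (s + r) / sqrt 2)"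
        using pos sq by (intro mult_pos_pos) linarith+
    qed
    also have "\<dots> = sqrt 2 * ((s + a) / sqrt (s + r)) / sqrt (s - r)"
      by (simp add: field_simps)
    also have "(s + a) / sqrt (s + r) \<le> sqrt (2 * r + w) + a / sqrt r"
    proof -
      have sr: "s + r > 0" using s r by simp
      have "(s + a) / sqrt (s + r) = s / sqrt (s + r) + a / sqrt (s + r)" by (simp add: add_divide_distrib)
      moreover have "s / sqrt (s + r) \<le> sqrt (2 * r + w)"
      proof -
        have "s / sqrt (s + r) \<le> (s + r) / sqrt (s + r)" using sr r by (intro divide_right_mono) auto
        also have "\<dots> = sqrt (s + r)" using sr by (metis real_div_sqrt less_imp_le)
        also have "\<dots> \<le> sqrt (2 * r + w)" using s by simp
        finally show ?thesis .
      qed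
      moreover have "a / sqrt (s + r) \<le> a / sqrt r"
        using a r s by (intro divide_left_mono) auto
      ultimately show ?thesis by linarith
    qed
    then have "sqrt 2 * ((s + a) / sqrt (s + r)) / sqrt (s - r) \<le> P / sqrt (s - r)"
      unfolding P_def using s by (intro divide_right_mono mult_left_mono) auto
    finally show ?thesis .
  qed
  note SB = split_bound[OF t r w a bnd]
  have s2: "sqrt 2 \<le> 3/2" by (rule sqrt2_le)
  have T1: "2 * P * sqrt w \<le> 5 * w + 3 * w * (a / r)"
  proof -
    have "2 * P * sqrt w = 2 * sqrt 2 * (sqrt (2 * r + w) * sqrt w) + 2 * sqrt 2 * a * (sqrt w / sqrt r)"
      unfolding P_def by (simp add: field_simps)
    moreover have B1: "sqrt (2 * r + w) * sqrt w \<le> sqrt 2 * w"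
    proof -
      have "sqrt (2 * r + w) * sqrt w = sqrt ((2 * r + w) * w)" by (simp add: real_sqrt_mult)
      also have "\<dots> \<le> sqrt (2 * w * w)" using rw w by (intro real_sqrt_le_mono mult_right_mono) auto
      also have "\<dots> = sqrt 2 * w" using w by (simp add: real_sqrt_mult)
      finally show ?thesis .
    qed
    moreover have B2: "sqrt w / sqrt r \<le> w / r"
    proof -
      define q where "q = sqrt w / sqrt r"
      have "sqrt r \<le> sqrt w" using rw r by simp
      then have q1: "q \<ge> 1" unfolding q_def using r by simp
      have "q * q = w / r" unfolding q_def using w r by (simp add: field_simps)
      moreover have "q \<le> q * q" using q1 by (simp add: mult_le_cancel_left1)
      ultimately show ?thesis unfolding q_def by simp
    qed
    ultimately have A0: "2 * P * sqrt w = 2 * sqrt 2 * (sqrt (2 * r + w) * sqrt w) + 2 * sqrt 2 * a * (sqrt w / sqrt r)"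
      by blast
    have A1: "2 * sqrt 2 * (sqrt (2 * r + w) * sqrt w) \<le> 2 * sqrt 2 * (sqrt 2 * w)"
      by (rule mult_left_mono[OF B1]) simp
    have A2: "2 * sqrt 2 * a * (sqrt w / sqrt r) \<le> 2 * sqrt 2 * a * (w / r)"
      by (rule mult_left_mono[OF B2]) (use a in simp)
    have "2 * P * sqrt w \<le> 2 * sqrt 2 * (sqrt 2 * w) + 2 * sqrt 2 * a * (w / r)"
      using A0 A1 A2 by linarith
    also have "\<dots> = 4 * w + 2 * sqrt 2 * a * (w / r)" by simp
    also have "\<dots> \<le> 4 * w + 2 * (3/2) * a * (w / r)"
      using s2 a w r by (intro add_left_mono mult_right_mono mult_left_mono) auto
    finally show ?thesis using w by (simp add: field_simps)
  qed
  have T2: "4 * t / sqrt (cosh (r + w) - cosh r) \<le> 6 * w"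
  proof -
    have D2: "cosh (r + w) - cosh r \<ge> ((r + w)\<^sup>2 - r\<^sup>2) / 2" using cosh_lower2[of r "r + w"] r w by simp
    moreover have "((r + w)\<^sup>2 - r\<^sup>2) / 2 \<ge> w * w / 2" using r w by (simp add: power2_eq_square algebra_simps)
    ultimately have "sqrt (cosh (r + w) - cosh r) \<ge> sqrt (w * w / 2)" by simp
    moreover have "sqrt (w * w / 2) = w / sqrt 2" using w by (simp add: real_sqrt_divide)
    ultimately have le: "w / sqrt 2 \<le> sqrt (cosh (r + w) - cosh r)" by simp
    have X: "0 < sqrt (cosh (r + w) - cosh r) * (w / sqrt 2)"
    proof -
      have "w / sqrt 2 > 0" using w by simp
      then show ?thesis using le by (intro mult_pos_pos) linarith+
    qed
    have "4 * t / sqrt (cosh (r + w) - cosh r) \<le> 4 * t / (w / sqrt 2)"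
      by (rule divide_left_mono[OF le _ X]) (use t in simp)
    also have "\<dots> = 4 * sqrt 2 * w" unfolding tw using w by (simp add: field_simps)
    also have "\<dots> \<le> 4 * (3/2) * w" using s2 w by simp
    finally show ?thesis by simp
  qed
  have "norm (integral {r<..} (FF t a r)) \<le> 5 * w + 3 * w * (a / r) + 6 * w"
    using SB T1 T2 by simp
  also have "\<dots> \<le> 14 * (w * (1 + a / r))" using w a r by (simp add: field_simps)
  finally show ?thesis unfolding w_def .
qed


theorem lemma5p6:
  shows "\<exists>C>0. \<forall>t a r :: real. t > 0 \<longrightarrow> a \<ge> 0 \<longrightarrow> r > 0 \<longrightarrow>
    norm (integral {r<..} (\<lambda>s. exp (\<i> * complex_of_real ((s + a)\<^sup>2 / (4 * t)))
                               * complex_of_real ((s + a) / sqrt (cosh s - cosh r))))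
    \<le> C * (if r \<ge> sqrt t / 2 then sqrt t * sqrt ((r + a) / sinh r)
            else sqrt t * (1 + a / r))"
proof (intro exI[of _ "14::real"] conjI allI impI)
  show "(14::real) > 0" by simp
  fix t a r :: real
  assume t: "t > 0" and a: "a \<ge> 0" and r: "r > 0"
  have eq: "(\<lambda>s. exp (\<i> * complex_of_real ((s + a)\<^sup>2 / (4 * t)))
                               * complex_of_real ((s + a) / sqrt (cosh s - cosh r))) = FF t a r"
    by (rule ext) (simp add: FF_def)
  show "norm (integral {r<..} (\<lambda>s. exp (\<i> * complex_of_real ((s + a)\<^sup>2 / (4 * t)))
                               * complex_of_real ((s + a) / sqrt (cosh s - cosh r))))
    \<le> 14 * (if r \<ge> sqrt t / 2 then sqrt t * sqrt ((r + a) / sinh r)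
            else sqrt t * (1 + a / r))"
    unfolding eq using case1[OF t r a] case2[OF t r a] by (cases "sqrt t / 2 \<le> r") auto
qed

end
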